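(* Let $G$ be the toroidal $L$-grid, let $r$ be a positive integer with $r\le L-2$, and let $\mathscr{S}$ be the block system consisting of all $r\times r$ subgrids of $G$. Then $\mu^+(\mathscr{S})\le 2+\frac2r$.
   Context: The toroidal $L$-grid has vertex set $(\mathbb{Z}/L\mathbb{Z})^2$, with $(a,b)\sim(c,d)$ iff ($a-c=\pm1$ and $b=d$) or ($b-d=\pm1$ and $a=c$) in $\mathbb{Z}/L\mathbb{Z}$. An $r\times r$ subgrid is a set $\{(a+i,b+j):0\le i,j\le r-1\}$. Potts configurations: $\sigma\in\Omega=[q]^V$, $q$ a positive integer. For $S\subseteq V$, $\partial S$ is the set of vertices outside $S$ with a neighbour in $S$. For $X\in\Omega$, $c\in[q]^S$: $X^{(S,c)}$ equals $c$ on $S$ and $X$ off $S$; $\mu_{X,S}(c)$ is the number of monochromatic edges of $X^{(S,c)}$ incident with at least one vertex of $S$. A colour used by $c$ is free with respect to $X,S$ if it does not occur among $\{X(u):u\in\partial S\}$; $f(X,S,c)$ is the number of free colours used by $c$. $\mu^+_{X,S,f}=\max\{\mu_{X,S}(c)/(|S|-f): c\in[q]^S,\ f(X,S,c)=f\}$ (empty maximum $=0$), and $\mu^+(\mathscr{S})=\max_{S\in\mathscr{S}}\max_{X\in\Omega}\max_{f\in\{0,\dots,|S|-1\}}\mu^+_{X,S,f}$. *)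

theory Defs
  imports Complex_Main "HOL-Library.FuncSet"
begin

type_synonym vtx = "nat \<times> nat"

definition grid_V :: "nat \<Rightarrow> vtx set" where
  "grid_V L = {0..<L} \<times> {0..<L}"

definition cyc_adj :: "nat \<Rightarrow> nat \<Rightarrow> nat \<Rightarrow> bool" where
  "cyc_adj L a c \<longleftrightarrow> (int a - int c - 1) mod int L = 0 \<or> (int a - int c + 1) mod int L = 0"

definition grid_adj :: "nat \<Rightarrow> vtx \<Rightarrow> vtx \<Rightarrow> bool" where
  "grid_adj L u v \<longleftrightarrow> u \<in> grid_V L \<and> v \<in> grid_V L \<and>
     ((cyc_adj L (fst u) (fst v) \<and> snd u = snd v) \<or> (cyc_adj L (snd u) (snd v) \<and> fst u = fst v))"

definition grid_edges :: "nat \<Rightarrow> vtx set set" where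
  "grid_edges L = {{u, v} | u v. grid_adj L u v}"

definition subgrid :: "nat \<Rightarrow> nat \<Rightarrow> nat \<Rightarrow> nat \<Rightarrow> vtx set" where
  "subgrid L r a b = {((a + i) mod L, (b + j) mod L) | i j. i < r \<and> j < r}"

definition subgrid_system :: "nat \<Rightarrow> nat \<Rightarrow> vtx set set" where
  "subgrid_system L r = {subgrid L r a b | a b. a < L \<and> b < L}"

definition configs :: "nat \<Rightarrow> nat \<Rightarrow> (vtx \<Rightarrow> nat) set" where
  "configs L q = grid_V L \<rightarrow>\<^sub>E {..<q}"

definition boundary :: "nat \<Rightarrow> vtx set \<Rightarrow> vtx set" where
  "boundary L S = {v \<in> grid_V L - S. \<exists>u\<in>S. grid_adj L u v}"

definition override :: "(vtx \<Rightarrow> nat) \<Rightarrow> vtx set \<Rightarrow> (vtx \<Rightarrow> nat) \<Rightarrow> (vtx \<Rightarrow> nat)" where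
  "override X S c = (\<lambda>v. if v \<in> S then c v else X v)"

definition mu :: "nat \<Rightarrow> (vtx \<Rightarrow> nat) \<Rightarrow> vtx set \<Rightarrow> (vtx \<Rightarrow> nat) \<Rightarrow> nat" where
  "mu L X S c = card {e \<in> grid_edges L. card (override X S c ` e) = 1 \<and> e \<inter> S \<noteq> {}}"

definition free_count :: "nat \<Rightarrow> (vtx \<Rightarrow> nat) \<Rightarrow> vtx set \<Rightarrow> (vtx \<Rightarrow> nat) \<Rightarrow> nat" where
  "free_count L X S c = card (c ` S - X ` boundary L S)"

definition mu_plus_XSf :: "nat \<Rightarrow> nat \<Rightarrow> (vtx \<Rightarrow> nat) \<Rightarrow> vtx set \<Rightarrow> nat \<Rightarrow> real" where
  "mu_plus_XSf L q X S f =
     (let C = {c \<in> S \<rightarrow>\<^sub>E {..<q}. free_count L X S c = f} in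
      if C = {} then 0 else Max ((\<lambda>c. real (mu L X S c) / real (card S - f)) ` C))"

definition mu_plus :: "nat \<Rightarrow> nat \<Rightarrow> vtx set set \<Rightarrow> real" where
  "mu_plus L q SS = Max {mu_plus_XSf L q X S f | S X f. S \<in> SS \<and> X \<in> configs L q \<and> f < card S}"

end

theory Submission
  imports Defs
begin

lemma mod_off_inj: assumes "(x + p) mod L = (x + p') mod L" "p < L" "p' < L" shows "p = (p'::nat)"
proof -
  have "p' - p = 0 \<and> p - p' = 0"
  proof (cases "p \<le> p'")
    case True
    then have "L dvd (x + p') - (x + p)" using assms(1) mod_eq_dvd_iff_nat[of "x+p" "x+p'" L] by simp
    then have "L dvd p' - p" by simp
    then show ?thesis using assms True by (metis diff_is_0_eq dvd_imp_le le_less_trans less_imp_diff_less not_gr0 not_less)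
  next
    case False
    then have "L dvd (x + p) - (x + p')" using assms(1) mod_eq_dvd_iff_nat[of "x+p'" "x+p" L] by simp
    then have "L dvd p - p'" by simp
    then show ?thesis using assms False by (metis diff_is_0_eq dvd_imp_le le_less_trans less_imp_diff_less not_gr0 not_less)
  qed
  then show ?thesis by simp
qed
lemma cyc_succ1: "L > 0 \<Longrightarrow> cyc_adj L ((Suc n) mod L) (n mod L)"
proof -
  assume "L > 0"
  have e1: "int (Suc n) = int L * int (Suc n div L) + int (Suc n mod L)"
    by (metis div_mult_mod_eq of_nat_add of_nat_mult mult.commute)
  have e2: "int n = int L * int (n div L) + int (n mod L)"
    by (metis div_mult_mod_eq of_nat_add of_nat_mult mult.commute)
  have "int (Suc n mod L) - int (n mod L) - 1 = int L * (int (n div L) - int (Suc n div L))"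
    using e1 e2 by (simp add: right_diff_distrib)
  then show ?thesis unfolding cyc_adj_def by simp
qed

lemma cyc_sym: "cyc_adj L x y \<Longrightarrow> cyc_adj L y x"
proof -
  have a: "(int y - int x + 1) = - (int x - int y - 1)" "(int y - int x - 1) = - (int x - int y + 1)" by auto
  assume "cyc_adj L x y"
  then have "int L dvd (int x - int y - 1) \<or> int L dvd (int x - int y + 1)"
    unfolding cyc_adj_def by (auto simp: mod_eq_0_iff_dvd)
  then have "int L dvd (int y - int x + 1) \<or> int L dvd (int y - int x - 1)"
    unfolding a by (simp only: dvd_minus_iff)
  then show "cyc_adj L y x" unfolding cyc_adj_def by (auto simp: mod_eq_0_iff_dvd)
qed

lemma cyc_succ2: "L > 0 \<Longrightarrow> cyc_adj L (n mod L) ((Suc n) mod L)"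
  using cyc_succ1 cyc_sym by blast

lemma cyc_nbr: assumes "cyc_adj L (m mod L) y" "y < L" "L > 0"
  shows "y = Suc m mod L \<or> y = (m + L - 1) mod L"
proof -
  have d0: "int L dvd (int m - int (m mod L))"
    by (metis dvd_minus_mod of_nat_mod zmod_int)
  have yy: "int y = int y mod int L" using assms(2) by simp
  from assms(1) consider "int L dvd (int (m mod L) - int y - 1)" | "int L dvd (int (m mod L) - int y + 1)"
    unfolding cyc_adj_def by (auto simp: mod_eq_0_iff_dvd)
  then show ?thesis
  proof cases
    case 1
    have "int L dvd (int y - (int m + int L - 1))"
    proof -
      have "int y - (int m + int L - 1) = - (int (m mod L) - int y - 1) - (int m - int (m mod L)) - int L" by simp
      then show ?thesis using 1 d0 by (metis dvd_diff dvd_minus_iff dvd_refl)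
    qed
    then have "int y mod int L = (int m + int L - 1) mod int L" by (simp add: mod_eq_dvd_iff)
    then have "int y = int ((m + L - 1) mod L)" using yy assms(3)
      by (simp add: zmod_int of_nat_diff)
    then show ?thesis by simp
  next
    case 2
    have "int L dvd (int y - (int m + 1))"
    proof -
      have "int y - (int m + 1) = - (int (m mod L) - int y + 1) - (int m - int (m mod L))" by simp
      then show ?thesis using 2 d0 by (metis dvd_diff dvd_minus_iff)
    qed
    then have "int y mod int L = (int m + 1) mod int L" by (simp add: mod_eq_dvd_iff)
    then have "int y = int (Suc m mod L)" using yy by (simp add: zmod_int add.commute)
    then show ?thesis by simp
  qed
qed

definition psi :: "nat \<Rightarrow> nat \<Rightarrow> nat \<Rightarrow> nat \<Rightarrow> nat \<Rightarrow> vtx" where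
  "psi L a b p q = ((a + L - 1 + p) mod L, (b + L - 1 + q) mod L)"

locale blk =
  fixes L r a b :: nat
  assumes r1: "r \<ge> 1" and rL: "r + 2 \<le> L"
begin

abbreviation "ps \<equiv> psi L a b"
abbreviation "SS \<equiv> subgrid L r a b"

lemma Lpos: "L > 0" using rL by simp

lemma shift: "1 \<le> p \<Longrightarrow> (x + L - 1 + p) mod L = (x + (p - 1)) mod L"
proof -
  assume "1 \<le> p"
  then have "x + L - 1 + p = (x + (p - 1)) + L" using Lpos by simp
  then show ?thesis by simp
qed

lemma S_eq: "SS = (\<lambda>(p,q). ps p q) ` ({1..r} \<times> {1..r})"
proof
  show "SS \<subseteq> (\<lambda>(p,q). ps p q) ` ({1..r} \<times> {1..r})"
  proof
    fix v assume "v \<in> SS"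
    then obtain i j where v: "v = ((a + i) mod L, (b + j) mod L)" "i < r" "j < r"
      unfolding subgrid_def by auto
    have "ps (Suc i) (Suc j) = v" unfolding psi_def v using shift[of "Suc i" a] shift[of "Suc j" b] by simp
    moreover have "(Suc i, Suc j) \<in> {1..r} \<times> {1..r}" using v by auto
    ultimately show "v \<in> (\<lambda>(p,q). ps p q) ` ({1..r} \<times> {1..r})" 
      by (metis (no_types, lifting) case_prod_conv image_eqI)
  qed
next
  show "(\<lambda>(p,q). ps p q) ` ({1..r} \<times> {1..r}) \<subseteq> SS"
  proof
    fix v assume "v \<in> (\<lambda>(p,q). ps p q) ` ({1..r} \<times> {1..r})"
    then obtain p q where pq: "v = ps p q" "p \<in> {1..r}" "q \<in> {1..r}" by auto
    have "v = ((a + (p - 1)) mod L, (b + (q - 1)) mod L)"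
      unfolding pq psi_def using pq shift[of p a] shift[of q b] by simp
    moreover have "p - 1 < r" "q - 1 < r" using pq by auto
    ultimately have "\<exists>i j. v = ((a + i) mod L, (b + j) mod L) \<and> i < r \<and> j < r" by blast
    then show "v \<in> SS" unfolding subgrid_def by simp
  qed
qed

lemma ps_inj: "ps p q = ps p' q' \<Longrightarrow> p \<le> Suc r \<Longrightarrow> p' \<le> Suc r \<Longrightarrow> q \<le> Suc r \<Longrightarrow> q' \<le> Suc r
   \<Longrightarrow> p = p' \<and> q = q'"
  unfolding psi_def using rL mod_off_inj[of "a + L - 1" p L p'] mod_off_inj[of "b + L - 1" q L q'] by auto

lemma card_S: "card SS = r * r"
proof -
  have "inj_on (\<lambda>(p,q). ps p q) ({1..r} \<times> {1..r})"
    by (rule inj_onI) (use ps_inj in fastforce)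
  then show ?thesis unfolding S_eq by (simp add: card_image)
qed

lemma ps_V: "ps p q \<in> grid_V L" unfolding psi_def grid_V_def using Lpos by auto

lemma ps_in_S: "ps p q \<in> SS \<longleftrightarrow> p \<in> {1..r} \<and> q \<in> {1..r}" if "p \<le> Suc r" "q \<le> Suc r"
proof
  assume "ps p q \<in> SS"
  then obtain p' q' where "ps p q = ps p' q'" "p' \<in> {1..r}" "q' \<in> {1..r}" unfolding S_eq by auto
  moreover have "p' \<le> Suc r" "q' \<le> Suc r" using \<open>p' \<in> {1..r}\<close> \<open>q' \<in> {1..r}\<close> by auto
  ultimately show "p \<in> {1..r} \<and> q \<in> {1..r}" using ps_inj[of p q p' q'] that by metis
next
  assume "p \<in> {1..r} \<and> q \<in> {1..r}"
  then have "(p, q) \<in> {1..r} \<times> {1..r}" by simp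
  then show "ps p q \<in> SS" unfolding S_eq by (metis (no_types, lifting) case_prod_conv image_eqI)
qed

lemma adj_q: "grid_adj L (ps p q) (ps p (Suc q))"
  using ps_V[of p q] ps_V[of p "Suc q"] cyc_succ2[OF Lpos, of "b + L - 1 + q"]
  unfolding grid_adj_def psi_def by simp

lemma adj_p: "grid_adj L (ps p q) (ps (Suc p) q)"
  using ps_V[of p q] ps_V[of "Suc p" q] cyc_succ2[OF Lpos, of "a + L - 1 + p"]
  unfolding grid_adj_def psi_def by simp

lemma grid_adj_sym: "grid_adj L u v \<Longrightarrow> grid_adj L v u"
  unfolding grid_adj_def using cyc_sym[of L "fst u" "fst v"] cyc_sym[of L "snd u" "snd v"] by auto

lemma bnd_gen: "v \<in> grid_V L \<Longrightarrow> v \<notin> SS \<Longrightarrow> u \<in> SS \<Longrightarrow> grid_adj L u v \<Longrightarrow> v \<in> boundary L SS"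
  unfolding boundary_def by auto

lemma bnd: assumes "p \<in> {1..r}"
  shows "ps p 0 \<in> boundary L SS" "ps p (Suc r) \<in> boundary L SS"
        "ps 0 p \<in> boundary L SS" "ps (Suc r) p \<in> boundary L SS"
proof -
  have r: "r \<in> {1..r}" "Suc 0 \<in> {1..r}" "p \<le> Suc r" "r \<le> Suc r" "Suc 0 \<le> Suc r" using r1 assms by auto
  show "ps p 0 \<in> boundary L SS"
  proof (rule bnd_gen[OF ps_V _ _ grid_adj_sym[OF adj_q[of p 0]]])
    show "ps p 0 \<notin> SS" using ps_in_S[of p 0] r by simp
    show "ps p (Suc 0) \<in> SS" using ps_in_S[of p "Suc 0"] r assms by simp
  qed
  show "ps p (Suc r) \<in> boundary L SS"
  proof (rule bnd_gen[OF ps_V _ _ adj_q[of p r]])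
    show "ps p (Suc r) \<notin> SS" using ps_in_S[of p "Suc r"] r by simp
    show "ps p r \<in> SS" using ps_in_S[of p r] r assms by simp
  qed
  show "ps 0 p \<in> boundary L SS"
  proof (rule bnd_gen[OF ps_V _ _ grid_adj_sym[OF adj_p[of 0 p]]])
    show "ps 0 p \<notin> SS" using ps_in_S[of 0 p] r by simp
    show "ps (Suc 0) p \<in> SS" using ps_in_S[of "Suc 0" p] r assms by simp
  qed
  show "ps (Suc r) p \<in> boundary L SS"
  proof (rule bnd_gen[OF ps_V _ _ adj_p[of r p]])
    show "ps (Suc r) p \<notin> SS" using ps_in_S[of "Suc r" p] r by simp
    show "ps r p \<in> SS" using ps_in_S[of r p] r assms by simp
  qed
qed

lemma nbr: assumes "p \<in> {1..r}" "q \<in> {1..r}" "grid_adj L (ps p q) v"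
  shows "v = ps (Suc p) q \<or> v = ps (p - 1) q \<or> v = ps p (Suc q) \<or> v = ps p (q - 1)"
proof -
  obtain v1 v2 where v: "v = (v1, v2)" "v1 < L" "v2 < L"
    using assms(3) unfolding grid_adj_def grid_V_def by (cases v) auto
  from assms(3) consider "cyc_adj L ((a + L - 1 + p) mod L) v1" "v2 = (b + L - 1 + q) mod L"
     | "cyc_adj L ((b + L - 1 + q) mod L) v2" "v1 = (a + L - 1 + p) mod L"
    unfolding grid_adj_def v psi_def by auto
  then show ?thesis
  proof cases
    case 1
    from cyc_nbr[OF 1(1) v(2) Lpos] have
      "v1 = (a + L - 1 + Suc p) mod L \<or> v1 = (a + L - 1 + (p - 1)) mod L"
    proof
      assume "v1 = (a + L - 1 + p + L - 1) mod L"
      moreover have "a + L - 1 + p + L - 1 = (a + L - 1 + (p - 1)) + L" using assms(1) Lpos by auto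
      ultimately show ?thesis by simp
    qed simp
    then show ?thesis using 1(2) unfolding v psi_def by auto
  next
    case 2
    from cyc_nbr[OF 2(1) v(3) Lpos] have
      "v2 = (b + L - 1 + Suc q) mod L \<or> v2 = (b + L - 1 + (q - 1)) mod L"
    proof
      assume "v2 = (b + L - 1 + q + L - 1) mod L"
      moreover have "b + L - 1 + q + L - 1 = (b + L - 1 + (q - 1)) + L" using assms(2) Lpos by auto
      ultimately show ?thesis by simp
    qed simp
    then show ?thesis using 2(2) unfolding v psi_def by auto
  qed
qed

end


lemma row_changes:
  fixes w :: "nat \<Rightarrow> nat" and Fc :: "nat set" and r :: nat
  assumes w0: "w 0 \<notin> Fc" and wr: "w (Suc r) \<notin> Fc"
  shows "card (Fc \<inter> w ` {1..r}) + (if Fc \<inter> w ` {1..r} = {} then 0 else 1)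
          \<le> card {q \<in> {0..r}. w q \<noteq> w (Suc q)}"
proof -
  define K where "K = Fc \<inter> w ` {1..r}"
  define Ch where "Ch = {q \<in> {0..r}. w q \<noteq> w (Suc q)}"
  define mx where "mx k = Max {q \<in> {1..r}. w q = k}" for k
  have finCh: "finite Ch" unfolding Ch_def by auto
  have mxK: "mx k \<in> {1..r} \<and> w (mx k) = k \<and> mx k \<in> Ch" if "k \<in> K" for k
  proof -
    have ne: "{q \<in> {1..r}. w q = k} \<noteq> {}" using that unfolding K_def by auto
    have fin: "finite {q \<in> {1..r}. w q = k}" by auto
    have m: "mx k \<in> {q \<in> {1..r}. w q = k}" unfolding mx_def using Max_in[OF fin ne] .
    have "w (Suc (mx k)) \<noteq> k"
    proof
      assume h: "w (Suc (mx k)) = k"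
      show False
      proof (cases "mx k = r")
        case True then show ?thesis using h wr that unfolding K_def by auto
      next
        case False
        then have "Suc (mx k) \<in> {q \<in> {1..r}. w q = k}" using m h by auto
        then have "Suc (mx k) \<le> mx k" unfolding mx_def using Max_ge[OF fin] by blast
        then show False by simp
      qed
    qed
    then show ?thesis using m unfolding Ch_def by auto
  qed
  have inj: "inj_on mx K" by (metis inj_onI mxK)
  have sub: "mx ` K \<subseteq> Ch" using mxK by auto
  show ?thesis
  proof (cases "K = {}")
    case True
    then show ?thesis unfolding K_def[symmetric] Ch_def[symmetric] by simp
  next
    case False
    define q1 where "q1 = Min {q \<in> {1..r}. w q \<in> Fc}"
    have ne: "{q \<in> {1..r}. w q \<in> Fc} \<noteq> {}" using False unfolding K_def by auto
    have fin: "finite {q \<in> {1..r}. w q \<in> Fc}" by auto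
    have m: "q1 \<in> {q \<in> {1..r}. w q \<in> Fc}" unfolding q1_def using Min_in[OF fin ne] .
    have nq: "w (q1 - 1) \<notin> Fc"
    proof
      assume h: "w (q1 - 1) \<in> Fc"
      show False
      proof (cases "q1 = 1")
        case True then show ?thesis using h w0 by simp
      next
        case False
        then have "q1 - 1 \<in> {q \<in> {1..r}. w q \<in> Fc}" using m h by auto
        then have "q1 \<le> q1 - 1" unfolding q1_def using Min_le[OF fin] by blast
        then show False using m by auto
      qed
    qed
    have q0Ch: "q1 - 1 \<in> Ch" using m nq unfolding Ch_def by auto
    have q0n: "q1 - 1 \<notin> mx ` K" using nq mxK unfolding K_def by auto
    have "card (insert (q1 - 1) (mx ` K)) \<le> card Ch"
      using sub q0Ch finCh by (intro card_mono) auto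
    moreover have "card (insert (q1 - 1) (mx ` K)) = card K + 1"
      using q0n card_image[OF inj] unfolding K_def by auto
    ultimately show ?thesis using False unfolding K_def[symmetric] Ch_def[symmetric] by simp
  qed
qed

lemma lines:
  fixes g :: "nat \<Rightarrow> nat \<Rightarrow> nat" and Fc :: "nat set" and r :: nat
  assumes bd: "\<And>p. p \<in> {1..r} \<Longrightarrow> g p 0 \<notin> Fc \<and> g p (Suc r) \<notin> Fc"
    and cov: "Fc \<subseteq> (\<Union>p\<in>{1..r}. g p ` {1..r})"
  shows "r * card Fc + card Fc \<le> r * (\<Sum>p\<in>{1..r}. card {q \<in> {0..r}. g p q \<noteq> g p (Suc q)})"
proof -
  define K where "K p = Fc \<inter> g p ` {1..r}" for p
  define ind where "ind p = (if K p = {} then 0 else 1::nat)" for p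
  define H where "H = (\<Sum>p\<in>{1..r}. card {q \<in> {0..r}. g p q \<noteq> g p (Suc q)})"
  have rowp: "card (K p) + ind p \<le> card {q \<in> {0..r}. g p q \<noteq> g p (Suc q)}" if "p \<in> {1..r}" for p
    unfolding K_def ind_def using row_changes[of "g p" Fc r] bd[OF that] by simp
  have Hs: "(\<Sum>p\<in>{1..r}. card (K p)) + (\<Sum>p\<in>{1..r}. ind p) \<le> H"
    unfolding H_def sum.distrib[symmetric] by (rule sum_mono) (use rowp in auto)
  have "Fc \<subseteq> (\<Union>p\<in>{1..r}. K p)" using cov unfolding K_def by auto
  moreover have "finite (\<Union>p\<in>{1..r}. K p)" unfolding K_def by auto
  ultimately have "card Fc \<le> card (\<Union>p\<in>{1..r}. K p)" by (rule card_mono[rotated])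
  also have "\<dots> \<le> (\<Sum>p\<in>{1..r}. card (K p))" by (rule card_UN_le) simp
  finally have f1: "card Fc \<le> (\<Sum>p\<in>{1..r}. card (K p))" .
  have "card (K p) \<le> r * ind p" for p
  proof (cases "K p = {}")
    case False
    have "card (K p) \<le> card (g p ` {1..r})" unfolding K_def by (rule card_mono) auto
    also have "\<dots> \<le> card {1..r}" by (rule card_image_le) simp
    finally show ?thesis using False unfolding ind_def by simp
  qed (simp add: ind_def)
  then have "(\<Sum>p\<in>{1..r}. card (K p)) \<le> (\<Sum>p\<in>{1..r}. r * ind p)" by (intro sum_mono) auto
  then have f2: "card Fc \<le> r * (\<Sum>p\<in>{1..r}. ind p)" using f1 by (simp add: sum_distrib_left)
  have "r * card Fc + card Fc \<le> r * (\<Sum>p\<in>{1..r}. card (K p)) + r * (\<Sum>p\<in>{1..r}. ind p)"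
    using f1 f2 by (simp add: add_le_mono)
  also have "\<dots> = r * ((\<Sum>p\<in>{1..r}. card (K p)) + (\<Sum>p\<in>{1..r}. ind p))" by (simp add: algebra_simps)
  also have "\<dots> \<le> r * H" using Hs by simp
  finally show ?thesis unfolding H_def .
qed



context blk begin

lemma main_count:
  fixes X c :: "vtx \<Rightarrow> nat"
  shows "r * mu L X SS c + 2 * (r + 1) * free_count L X SS c \<le> 2 * (r + 1) * (r * r)"
proof -
  define Y where "Y = override X SS c"
  define kap where "kap p q = Y (ps p q)" for p q
  define B where "B = {1..r} \<times> {0..r}"
  define en where "en t = (case t of Inl (p,q) \<Rightarrow> (ps p q, ps p (Suc q)) | Inr (q,p) \<Rightarrow> (ps p q, ps (Suc p) q))"
    for t :: "(nat \<times> nat) + (nat \<times> nat)"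
  define T where "T = Inl ` B \<union> Inr ` B"
  define mono where "mono t = (Y (fst (en t)) = Y (snd (en t)))" for t
  define ME where "ME = {e \<in> grid_edges L. card (Y ` e) = 1 \<and> e \<inter> SS \<noteq> {}}"
  define Fc where "Fc = c ` SS - X ` boundary L SS"
  have mu_eq: "mu L X SS c = card ME" unfolding mu_def ME_def Y_def ..
  have fc_eq: "free_count L X SS c = card Fc" unfolding free_count_def Fc_def ..
  have finB: "finite B" unfolding B_def by simp
  have finT: "finite T" unfolding T_def using finB by simp
  have cardB: "card B = r * (r + 1)" unfolding B_def by simp
  have cardT: "card T = 2 * (r * (r + 1))"
    unfolding T_def using finB cardB
    by (subst card_Un_disjoint) (auto simp: card_image)
  have key: "{u, v} \<in> (\<lambda>t. {fst (en t), snd (en t)}) ` {t \<in> T. mono t}"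
    if uS: "u \<in> SS" and adj: "grid_adj L u v" and Yuv: "Y u = Y v" for u v
  proof -
    obtain p q where pq: "u = ps p q" "p \<in> {1..r}" "q \<in> {1..r}" using uS unfolding S_eq by auto
    have pB: "(q, p) \<in> B" "(q, p - 1) \<in> B" "(p, q) \<in> B" "(p, q - 1) \<in> B" using pq unfolding B_def by auto
    from nbr[OF pq(2,3) adj[unfolded pq(1)]] consider
      "v = ps (Suc p) q" | "v = ps (p - 1) q" | "v = ps p (Suc q)" | "v = ps p (q - 1)" by blast
    then show ?thesis
    proof cases
      case 1
      have "en (Inr (q, p)) = (u, v)" unfolding en_def 1 pq by simp
      then show ?thesis using pB Yuv unfolding T_def mono_def
        by (intro image_eqI[of _ _ "Inr (q, p)"]) auto
    next
      case 2
      have "en (Inr (q, p - 1)) = (v, u)" unfolding en_def 2 pq using pq by simp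
      then show ?thesis using pB Yuv unfolding T_def mono_def
        by (intro image_eqI[of _ _ "Inr (q, p - 1)"]) auto
    next
      case 3
      have "en (Inl (p, q)) = (u, v)" unfolding en_def 3 pq by simp
      then show ?thesis using pB Yuv unfolding T_def mono_def
        by (intro image_eqI[of _ _ "Inl (p, q)"]) auto
    next
      case 4
      have "en (Inl (p, q - 1)) = (v, u)" unfolding en_def 4 pq using pq by simp
      then show ?thesis using pB Yuv unfolding T_def mono_def
        by (intro image_eqI[of _ _ "Inl (p, q - 1)"]) auto
    qed
  qed
  have sub: "ME \<subseteq> (\<lambda>t. {fst (en t), snd (en t)}) ` {t \<in> T. mono t}"
  proof
    fix e assume "e \<in> ME"
    then have e0: "e \<in> grid_edges L" "card (Y ` e) = 1" "e \<inter> SS \<noteq> {}" unfolding ME_def by auto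
    from e0(1) obtain u v where uv: "e = {u, v}" "grid_adj L u v" unfolding grid_edges_def by blast
    have e: "e = {u, v}" "grid_adj L u v" "card (Y ` {u, v}) = 1" "u \<in> SS \<or> v \<in> SS"
      using uv e0 by auto
    have Yuv: "Y u = Y v"
    proof (rule ccontr)
      assume "Y u \<noteq> Y v"
      then have "card (Y ` {u, v}) = 2" by simp
      then show False using e(3) by simp
    qed
    from e(4) show "e \<in> (\<lambda>t. {fst (en t), snd (en t)}) ` {t \<in> T. mono t}"
    proof
      assume "u \<in> SS" then show ?thesis using key[OF _ e(2) Yuv] e(1) by simp
    next
      assume "v \<in> SS" then show ?thesis using key[OF _ grid_adj_sym[OF e(2)] Yuv[symmetric]] e(1)
        by (simp add: insert_commute)
    qed
  qed
  have "card ME \<le> card ((\<lambda>t. {fst (en t), snd (en t)}) ` {t \<in> T. mono t})"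
    by (rule card_mono[OF _ sub]) (use finT in simp)
  also have "\<dots> \<le> card {t \<in> T. mono t}" by (rule card_image_le) (use finT in simp)
  finally have mu1: "card ME \<le> card {t \<in> T. mono t}" .
  have split: "card {t \<in> T. mono t} + card {t \<in> T. \<not> mono t} = card T"
  proof -
    have "card ({t \<in> T. mono t} \<union> {t \<in> T. \<not> mono t}) = card {t \<in> T. mono t} + card {t \<in> T. \<not> mono t}"
      by (rule card_Un_disjoint) (use finT in auto)
    moreover have "{t \<in> T. mono t} \<union> {t \<in> T. \<not> mono t} = T" by auto
    ultimately show ?thesis by simp
  qed
  define H where "H = (\<Sum>p\<in>{1..r}. card {q \<in> {0..r}. kap p q \<noteq> kap p (Suc q)})"
  define V where "V = (\<Sum>q\<in>{1..r}. card {p \<in> {0..r}. kap p q \<noteq> kap (Suc p) q})"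
  have nm_eq: "{t \<in> T. \<not> mono t} = Inl ` Sigma {1..r} (\<lambda>p. {q \<in> {0..r}. kap p q \<noteq> kap p (Suc q)})
      \<union> Inr ` Sigma {1..r} (\<lambda>q. {p \<in> {0..r}. kap p q \<noteq> kap (Suc p) q})"
    unfolding T_def B_def mono_def kap_def en_def by auto
  have nm_card: "card {t \<in> T. \<not> mono t} = H + V"
    unfolding nm_eq H_def V_def
    by (subst card_Un_disjoint) (auto simp: card_image)
  have Xb: "Y w = X w" "X w \<notin> Fc" if "w \<in> boundary L SS" for w
    using that unfolding Y_def override_def Fc_def boundary_def by auto
  have covH: "Fc \<subseteq> (\<Union>p\<in>{1..r}. kap p ` {1..r})"
  proof
    fix k assume "k \<in> Fc"
    then obtain s where s: "s \<in> SS" "k = c s" unfolding Fc_def by auto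
    then obtain p q where pq: "s = ps p q" "p \<in> {1..r}" "q \<in> {1..r}" unfolding S_eq by auto
    have "kap p q = k" unfolding kap_def Y_def override_def using s pq by simp
    then show "k \<in> (\<Union>p\<in>{1..r}. kap p ` {1..r})" using pq by blast
  qed
  have covV: "Fc \<subseteq> (\<Union>q\<in>{1..r}. (\<lambda>p. kap p q) ` {1..r})"
  proof
    fix k assume "k \<in> Fc"
    then obtain s where s: "s \<in> SS" "k = c s" unfolding Fc_def by auto
    then obtain p q where pq: "s = ps p q" "p \<in> {1..r}" "q \<in> {1..r}" unfolding S_eq by auto
    have "kap p q = k" unfolding kap_def Y_def override_def using s pq by simp
    then show "k \<in> (\<Union>q\<in>{1..r}. (\<lambda>p. kap p q) ` {1..r})" using pq by blast
  qed
  have lH: "r * card Fc + card Fc \<le> r * H"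
    unfolding H_def
    by (rule lines[OF _ covH]) (use bnd Xb in \<open>auto simp: kap_def\<close>)
  have lV: "r * card Fc + card Fc \<le> r * V"
    unfolding V_def
    using lines[of r "\<lambda>q p. kap p q" Fc, OF _ covV] bnd Xb by (auto simp: kap_def)
  have tot: "card ME + H + V \<le> 2 * (r * (r + 1))" using mu1 split nm_card cardT by simp
  then have "r * (card ME + H + V) \<le> r * (2 * (r * (r + 1)))" by simp
  then have "r * card ME + r * H + r * V \<le> 2 * (r + 1) * (r * r)" by (simp add: algebra_simps)
  then show ?thesis unfolding mu_eq fc_eq using lH lV by (simp add: algebra_simps)
qed

end



lemma elem_bound:
  fixes r m f :: nat
  assumes r1: "r \<ge> 1" and f: "f < r * r" and h: "r * m + 2 * (r + 1) * f \<le> 2 * (r + 1) * (r * r)"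
  shows "real m / real (r * r - f) \<le> 2 + 2 / real r"
proof -
  have "r * m \<le> 2 * (r + 1) * (r * r) - 2 * (r + 1) * f" using h by simp
  also have "\<dots> = 2 * (r + 1) * (r * r - f)" by (simp add: diff_mult_distrib2)
  finally have n: "r * m \<le> 2 * (r + 1) * (r * r - f)" .
  have "0 < r * r - f" using f by simp
  then have d: "real (r * r - f) > 0" by (simp only: of_nat_0_less_iff)
  have rp: "real r > 0" using r1 by simp
  have "real r * real m \<le> 2 * (real r + 1) * real (r * r - f)"
    using n by (metis (mono_tags) of_nat_1 of_nat_add of_nat_le_iff of_nat_mult of_nat_numeral)
  then have "real m \<le> (2 + 2 / real r) * real (r * r - f)"
    using rp by (simp add: field_simps)
  then show ?thesis using pos_divide_le_eq[OF d, of "real m" "2 + 2 / real r"] by (metis mult.commute)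
qed

lemma cardS_sys: assumes "S \<in> subgrid_system L r" "q \<ge> 1" "r \<ge> 1" "r + 2 \<le> L"
  shows "card S = r * r"
proof -
  from assms(1) obtain a b where S: "S = subgrid L r a b" unfolding subgrid_system_def by blast
  interpret blk L r a b using assms by unfold_locales auto
  show ?thesis using card_S S by simp
qed

theorem lemma2p9:
  fixes L r q :: nat
  assumes "q \<ge> 1" and "r \<ge> 1" and "r + 2 \<le> L"
  shows "mu_plus L q (subgrid_system L r) \<le> 2 + 2 / real r"
proof -
  interpret B0: blk L r 0 0 using assms by unfold_locales auto
  define M where "M = {mu_plus_XSf L q X S f | S X f. S \<in> subgrid_system L r \<and> X \<in> configs L q \<and> f < card S}"
  have cardS: "card S = r * r" if "S \<in> subgrid_system L r" for S
    using that assms by (rule cardS_sys)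
  have finSys: "finite (subgrid_system L r)"
  proof -
    have "subgrid_system L r \<subseteq> (\<lambda>(a, b). subgrid L r a b) ` ({..<L} \<times> {..<L})"
      unfolding subgrid_system_def by auto
    then show ?thesis by (rule finite_subset) simp
  qed
  have finC: "finite (configs L q)" unfolding configs_def grid_V_def by (intro finite_PiE) auto
  have finM: "finite M"
  proof -
    have "M \<subseteq> (\<lambda>(S, X, f). mu_plus_XSf L q X S f) ` (subgrid_system L r \<times> configs L q \<times> {..<r * r})"
    proof
      fix x assume "x \<in> M"
      then obtain S X f where x: "x = mu_plus_XSf L q X S f" "S \<in> subgrid_system L r"
        "X \<in> configs L q" "f < card S" unfolding M_def by blast
      then have "(S, X, f) \<in> subgrid_system L r \<times> configs L q \<times> {..<r * r}" using cardS by simp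
      then show "x \<in> (\<lambda>(S, X, f). mu_plus_XSf L q X S f) ` (subgrid_system L r \<times> configs L q \<times> {..<r * r})"
        unfolding x(1) by (rule rev_image_eqI) simp
    qed
    then show ?thesis by (rule finite_subset) (use finSys finC in simp)
  qed
  have neM: "M \<noteq> {}"
  proof -
    have "\<exists>a b. subgrid L r 0 0 = subgrid L r a b \<and> a < L \<and> b < L"
      using assms by (intro exI[of _ "0::nat"]) simp
    then have "subgrid L r 0 0 \<in> subgrid_system L r" unfolding subgrid_system_def by simp
    moreover have "restrict (\<lambda>_. 0) (grid_V L) \<in> configs L q" unfolding configs_def using assms by auto
    moreover have "0 < card (subgrid L r 0 0)" using B0.card_S assms by simp
    ultimately show ?thesis unfolding M_def by blast
  qed
  have bnd: "x \<le> 2 + 2 / real r" if "x \<in> M" for x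
  proof -
    obtain S X f where x: "x = mu_plus_XSf L q X S f" "S \<in> subgrid_system L r" "f < card S"
      using \<open>x \<in> M\<close> unfolding M_def by auto
    obtain a b where S: "S = subgrid L r a b" using x(2) unfolding subgrid_system_def by auto
    interpret blk L r a b using assms by unfold_locales auto
    define C where "C = {c \<in> S \<rightarrow>\<^sub>E {..<q}. free_count L X S c = f}"
    have finS: "finite S" using card_S cardS[OF x(2)] assms
      by (metis card.infinite mult_is_0 not_one_le_zero)
    have "C \<subseteq> S \<rightarrow>\<^sub>E {..<q}" unfolding C_def by blast
    moreover have "finite (S \<rightarrow>\<^sub>E {..<q})" using finS by (intro finite_PiE) auto
    ultimately have finCC: "finite C" by (rule finite_subset)
    have "real (mu L X S c) / real (card S - f) \<le> 2 + 2 / real r" if "c \<in> C" for c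
    proof -
      have fc: "free_count L X S c = f" using that unfolding C_def by auto
      show ?thesis
        using elem_bound[OF assms(2), of f "mu L X S c"] main_count[of X c] fc x(3) cardS[OF x(2)] S
        by simp
    qed
    then show ?thesis unfolding x(1) mu_plus_XSf_def Let_def C_def[symmetric]
      using finCC by (auto simp: Max_le_iff)
  qed
  show ?thesis unfolding mu_plus_def M_def[symmetric] using finM neM bnd by (simp add: Max_le_iff)
qed


end
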